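(* Let $v_1,\dots,v_n$ be vectors in an $l$-dimensional vector space over $\mathrm{GF}(2)$. Suppose that for every subset $C\subseteq\{1,\dots,n\}$ with $|C|\equiv 2 \pmod 4$ we have $\sum_{i\in C} v_i \neq \mathbf{0}$. Then $l \geq \sqrt{n}-2$. *)

theory Defs
  imports Complex_Main "HOL-Library.Z2" "HOL-Library.Function_Algebras"
begin

end

theory Submission
  imports Defs
begin

lemma sum_fun_apply': "finite A \<Longrightarrow> (sum f A) x = (\<Sum>i\<in>A. f i x)"
  by (induction A rule: finite_induct) auto

lemma sum_fun_zero_iff:
  fixes v :: "nat \<Rightarrow> nat \<Rightarrow> bit"
  shows "finite C \<Longrightarrow> (sum v C = 0) \<longleftrightarrow> (\<forall>j. (\<Sum>i\<in>C. v i j) = 0)"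
  by (auto simp: fun_eq_iff sum_fun_apply')

lemma bit_if_mult: "(if (b::bit) = 1 then x else 0) = b * x"
  by (cases b) auto

lemma dep:
  fixes v :: "nat \<Rightarrow> nat \<Rightarrow> bit"
  shows "finite J \<Longrightarrow> (\<forall>i\<in>J. \<forall>j\<ge>m. v i j = 0) \<Longrightarrow> card J \<ge> m+1 \<Longrightarrow>
     \<exists>C\<subseteq>J. C \<noteq> {} \<and> (\<forall>j. (\<Sum>i\<in>C. v i j) = 0)"
proof (induction m arbitrary: v J)
  case 0
  then obtain i where "i \<in> J" by fastforce
  then show ?case using 0 by (intro exI[of _ "{i}"]) auto
next
  case (Suc m)
  show ?case
  proof (cases "\<forall>i\<in>J. v i m = 0")
    case True
    have "\<forall>i\<in>J. \<forall>j\<ge>m. v i j = 0"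
      using True Suc.prems(2) by (metis Suc_leI le_eq_less_or_eq)
    then show ?thesis using Suc.IH[of J v] Suc.prems by auto
  next
    case False
    then obtain i0 where i0: "i0 \<in> J" "v i0 m = 1" by auto
    define w where "w i = (\<lambda>j. v i j + v i m * v i0 j)" for i
    have wsup: "\<forall>i\<in>J - {i0}. \<forall>j\<ge>m. w i j = 0"
    proof (intro ballI allI impI)
      fix i j assume i: "i \<in> J - {i0}" and j: "m \<le> j"
      show "w i j = 0"
      proof (cases "j = m")
        case True
        then show ?thesis using i0 by (cases "v i m") (auto simp: w_def)
      next
        case False
        then have "j \<ge> Suc m" using j by auto
        then show ?thesis using i i0 Suc.prems(2) by (auto simp: w_def)
      qed
    qed
    have "card (J - {i0}) \<ge> m + 1" using Suc.prems i0 by auto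
    then obtain D where D: "D \<subseteq> J - {i0}" "D \<noteq> {}" "\<forall>j. (\<Sum>i\<in>D. w i j) = 0"
      using Suc.IH[of "J - {i0}" w] wsup Suc.prems(1) by auto
    have finD: "finite D" using D(1) Suc.prems(1) finite_subset by blast
    define c where "c = (\<Sum>i\<in>D. v i m)"
    have eq: "(\<Sum>i\<in>D. v i j) + c * v i0 j = 0" for j
    proof -
      have "(\<Sum>i\<in>D. w i j) = (\<Sum>i\<in>D. v i j) + c * v i0 j"
        by (simp only: w_def sum.distrib c_def sum_distrib_right)
      then show ?thesis using D(3) by simp
    qed
    show ?thesis
    proof (cases "c = 0")
      case True
      then show ?thesis using D eq by (intro exI[of _ D]) auto
    next
      case False
      then have c1: "c = 1" by simp
      have "i0 \<notin> D" using D by auto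
      then have "(\<Sum>i\<in>insert i0 D. v i j) = 0" for j
        using eq[of j] c1 finD by (simp add: add.commute)
      then show ?thesis using D i0 by (intro exI[of _ "insert i0 D"]) auto
    qed
  qed
qed

lemma of_nat_bit_zero: "((of_nat k :: bit) = 0) \<longleftrightarrow> even k"
  by (induction k) auto

lemma dep_even:
  fixes v :: "nat \<Rightarrow> nat \<Rightarrow> bit"
  assumes "finite J" "\<forall>i\<in>J. \<forall>j\<ge>l. v i j = 0" "card J \<ge> l+2"
  shows "\<exists>C\<subseteq>J. C \<noteq> {} \<and> even (card C) \<and> (\<forall>j. (\<Sum>i\<in>C. v i j) = 0)"
proof -
  define u where "u i = (v i)(l := 1)" for i
  have "\<forall>i\<in>J. \<forall>j\<ge>l+1. u i j = 0" using assms(2) by (auto simp: u_def)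
  then obtain C where C: "C \<subseteq> J" "C \<noteq> {}" "\<forall>j. (\<Sum>i\<in>C. u i j) = 0"
    using dep[of J "l+1" u] assms by auto
  have "(\<Sum>i\<in>C. u i l) = of_nat (card C)" by (simp add: u_def)
  then have "even (card C)" using C(3) of_nat_bit_zero by metis
  moreover have "(\<Sum>i\<in>C. v i j) = 0" for j
  proof (cases "j = l")
    case True
    have "(\<Sum>i\<in>C. v i j) = (\<Sum>i\<in>C. 0)"
      using C(1) assms(2) True by (intro sum.cong) auto
    then show ?thesis by simp
  next
    case False
    then show ?thesis using C(3)[rule_format, of j] by (simp add: u_def)
  qed
  ultimately show ?thesis using C by blast
qed

lemma bit_add_zero: "(x::bit) + y = 0 \<Longrightarrow> y = x"
  by (cases x; cases y) auto

lemma bit_self_add: "(x::bit) + x = 0"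
  by (cases x) auto

theorem lemma4:
  fixes v :: "nat \<Rightarrow> nat \<Rightarrow> bit" and n l :: nat
  assumes in_space: "\<forall>i\<in>{1..n}. \<forall>j\<ge>l. v i j = 0"
    and sums: "\<forall>C. C \<subseteq> {1..n} \<and> card C mod 4 = 2 \<longrightarrow> (\<Sum>i\<in>C. v i) \<noteq> 0"
  shows "real l \<ge> sqrt (real n) - 2"
proof (rule ccontr)
  assume "\<not> ?thesis"
  then have lt: "real l + 2 < sqrt (real n)" by simp
  define p where "p = l + 2"
  have "real (p * p) < real n"
  proof -
    have "real p * real p < sqrt (real n) * sqrt (real n)"
    proof -
      have s0: "0 < sqrt (real n)" using lt by (smt (verit) of_nat_0_le_iff)
      have "real p < sqrt (real n)" using lt p_def by simp
      then show ?thesis using s0 by (intro mult_strict_mono) auto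
    qed
    then show ?thesis by simp
  qed
  then have pn: "p * p < n" by linarith
  have noZ: "\<not> (\<forall>j. (\<Sum>i\<in>C. v i j) = 0)" if "C \<subseteq> {1..n}" "card C mod 4 = 2" for C
  proof -
    have "finite C" using that(1) finite_subset by blast
    then show ?thesis using sums that sum_fun_zero_iff by blast
  qed
  have mod0: "card C mod 4 = 0" if "C \<subseteq> {1..n}" "even (card C)" "\<forall>j. (\<Sum>i\<in>C. v i j) = 0" for C
  proof -
    have "card C mod 4 \<noteq> 2" using noZ that by blast
    then show ?thesis using that(2) by presburger
  qed
  define B where "B k = {k*p+1 .. k*p+p}" for k
  have Bsub: "B k \<subseteq> {1..n}" if "k < p" for k
  proof -
    have "(k+1)*p \<le> p * p" using that by (intro mult_le_mono1) auto
    then have "k*p + p \<le> p * p" by simp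
    then show ?thesis using pn by (auto simp: B_def)
  qed
  have Bidx: "(x - 1) div p = k" if "x \<in> B k" for x k
  proof -
    define r where "r = x - 1 - k*p"
    from that have e: "x - 1 = r + k*p" "r < p" by (auto simp: B_def r_def)
    have pp: "0 < p" using p_def by simp
    have "(r + k*p) div p = r div p + k" using pp by simp
    then show ?thesis using e by simp
  qed
  have "\<forall>k\<in>{..<p}. \<exists>A. A \<subseteq> B k \<and> A \<noteq> {} \<and> even (card A) \<and> (\<forall>j. (\<Sum>i\<in>A. v i j) = 0)"
  proof
    fix k assume "k \<in> {..<p}"
    then have "B k \<subseteq> {1..n}" using Bsub by auto
    moreover have "card (B k) = p" by (simp add: B_def)
    ultimately show "\<exists>A. A \<subseteq> B k \<and> A \<noteq> {} \<and> even (card A) \<and> (\<forall>j. (\<Sum>i\<in>A. v i j) = 0)"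
      using dep_even[of "B k" l v] in_space p_def by (auto simp: B_def)
  qed
  then obtain A where A: "\<And>k. k < p \<Longrightarrow> A k \<subseteq> B k \<and> A k \<noteq> {} \<and> even (card (A k)) \<and> (\<forall>j. (\<Sum>i\<in>A k. v i j) = 0)"
    by (metis lessThan_iff)
  define a where "a k = (SOME x. x \<in> A k)" for k
  have aA: "a k \<in> A k" if "k < p" for k
    using A[OF that] unfolding a_def by (simp add: some_in_eq)
  have aB: "a k \<in> B k" if "k < p" for k using aA A that by blast
  have an: "a k \<in> {1..n}" if "k < p" for k using aB Bsub that by blast
  have "\<forall>k\<in>{..<p}. \<forall>j\<ge>l. v (a k) j = 0" using an in_space by auto
  then obtain K where K: "K \<subseteq> {..<p}" "K \<noteq> {}" "even (card K)" "\<forall>j. (\<Sum>k\<in>K. v (a k) j) = 0"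
    using dep_even[of "{..<p}" l "\<lambda>k. v (a k)"] p_def by auto
  have inj: "inj_on a K"
  proof
    fix x y assume "x \<in> K" "y \<in> K" "a x = a y"
    then have "x < p" "y < p" using K(1) by auto
    then have "a x \<in> B x" "a y \<in> B y" using aB by auto
    then show "x = y" using Bidx[of "a x" x] Bidx[of "a y" y] \<open>a x = a y\<close> by simp
  qed
  define Bs where "Bs = a ` K"
  have BsS: "Bs \<subseteq> {1..n}" using an K(1) Bs_def by auto
  have finK: "finite K" using K(1) finite_subset by blast
  have cBs: "card Bs = card K" using inj Bs_def card_image by blast
  have zBs: "\<forall>j. (\<Sum>i\<in>Bs. v i j) = 0"
  proof
    fix j
    show "(\<Sum>i\<in>Bs. v i j) = 0"
      using sum.reindex[OF inj, of "\<lambda>i. v i j"] K(4) unfolding Bs_def comp_def by simp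
  qed
  have Bs4: "card Bs mod 4 = 0" using mod0[OF BsS _ zBs] cBs K(3) by simp
  obtain k where k: "k \<in> K" using K(2) by blast
  have kp: "k < p" using k K(1) by auto
  define Ak where "Ak = A k"
  have AkS: "Ak \<subseteq> {1..n}" using A[OF kp] Bsub[OF kp] unfolding Ak_def by blast
  have Ak4: "card Ak mod 4 = 0" using mod0[OF AkS] A[OF kp] unfolding Ak_def by blast
  have int: "Ak \<inter> Bs = {a k}"
  proof
    show "{a k} \<subseteq> Ak \<inter> Bs" using aA kp k unfolding Bs_def Ak_def by auto
    show "Ak \<inter> Bs \<subseteq> {a k}"
    proof
      fix x assume x: "x \<in> Ak \<inter> Bs"
      then obtain k' where k': "k' \<in> K" "x = a k'" using Bs_def by auto
      have "x \<in> B k" using x A[OF kp] unfolding Ak_def by auto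
      moreover have "x \<in> B k'" using k' aB K(1) by auto
      ultimately have "k = k'" using Bidx[of x k] Bidx[of x k'] by simp
      then show "x \<in> {a k}" using k' by simp
    qed
  qed
  have finAk: "finite Ak" using AkS finite_subset by blast
  have finBs: "finite Bs" using BsS finite_subset by blast
  have akA: "a k \<in> Ak" "a k \<in> Bs" using int by auto
  define C where "C = (Ak - {a k}) \<union> (Bs - {a k})"
  have disj: "(Ak - {a k}) \<inter> (Bs - {a k}) = {}" using int by auto
  have CS: "C \<subseteq> {1..n}" using AkS BsS C_def by auto
  have "card Ak \<noteq> 0" using A[OF kp] finAk unfolding Ak_def by simp
  moreover have "even (card Ak)" using A[OF kp] unfolding Ak_def by blast
  ultimately have cardAk: "card Ak \<ge> 2" by presburger
  have "card Bs \<noteq> 0" using cBs K(2) finK by simp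
  moreover have "even (card Bs)" using cBs K(3) by simp
  ultimately have cardBs: "card Bs \<ge> 2" by presburger
  have "card C = (card Ak - 1) + (card Bs - 1)"
    unfolding C_def using disj finAk finBs akA by (simp add: card_Un_disjoint)
  then have "card C + 2 = card Ak + card Bs" using cardAk cardBs by simp
  then have "(card C + 2) mod 4 = 0" using Ak4 Bs4 by (simp add: mod_add_eq[symmetric])
  then have cC: "card C mod 4 = 2" by presburger
  have "(\<Sum>i\<in>C. v i j) = 0" for j
  proof -
    have e1: "(\<Sum>i\<in>Ak. v i j) = v (a k) j + (\<Sum>i\<in>Ak - {a k}. v i j)"
      by (rule sum.remove[OF finAk akA(1)])
    have e2: "(\<Sum>i\<in>Bs. v i j) = v (a k) j + (\<Sum>i\<in>Bs - {a k}. v i j)"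
      by (rule sum.remove[OF finBs akA(2)])
    have z: "(\<Sum>i\<in>Ak. v i j) = 0" using A[OF kp] unfolding Ak_def by blast
    have z2: "(\<Sum>i\<in>Bs. v i j) = 0" using zBs by blast
    have s1: "(\<Sum>i\<in>Ak - {a k}. v i j) = v (a k) j"
      by (rule bit_add_zero) (use e1 z in \<open>simp only:\<close>)
    have s2: "(\<Sum>i\<in>Bs - {a k}. v i j) = v (a k) j"
      by (rule bit_add_zero) (use e2 z2 in \<open>simp only:\<close>)
    have fA: "finite (Ak - {a k})" using finAk by blast
    have fB: "finite (Bs - {a k})" using finBs by blast
    have "(\<Sum>i\<in>C. v i j) = (\<Sum>i\<in>Ak - {a k}. v i j) + (\<Sum>i\<in>Bs - {a k}. v i j)"
      unfolding C_def by (rule sum.union_disjoint[OF fA fB disj])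
    also have "\<dots> = v (a k) j + v (a k) j" using s1 s2 by (simp only:)
    also have "\<dots> = 0" by (rule bit_self_add)
    finally show ?thesis .
  qed
  then show False using noZ[OF CS cC] by blast
qed

end
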